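(* (a) If $\Delta\vdash t$ is a closed nominal term-in-context, then its translation $\mathcal{T}(\Delta,t)$ is a closed CRS meta-term. (b) Moreover, if $t$ is ground, then $\mathcal{T}(\Delta,t)$ is a CRS term.
   Context: Nominal terms: $s,t ::= a \mid \pi\cdot X \mid [a]s \mid f\,s \mid (s_1,\ldots,s_n)$ over atoms $a$, variables $X$, function symbols $f$ with arities, and finite-support permutations $\pi$ of atoms. A freshness context $\Delta$ is a set of constraints $a\#X$. Ground terms contain no variables. $\Delta\vdash t$ is closed if: (1) every atom occurrence $a$ in $t$ lies under an abstraction $[a]$; (2) if $\pi\cdot X$ is in the scope of an abstraction of $\pi(a)$ then every occurrence $\pi'\cdot X$ of $X$ in $t$ is in the scope of an abstraction of $\pi'(a)$, or $a\#X\in\Delta$; (3) for two occurrences $\pi_1\cdot X,\pi_2\cdot X$ and $a$ with $\pi_1(a)\neq\pi_2(a)$, if $a$ is not abstracted in one of the occurrences then $a\#X\in\Delta$. CRS meta-terms: $a\mid Z^n(t_1,\dots,t_n)\mid[a]t\mid f\,t\mid(t_1,\dots,t_n)$, where each meta-variable $Z^n$ has a fixed arity $n$ respected by all its meta-applications; a meta-term is closed if every variable occurrence is bound; a CRS term contains no meta-variables. Translation: $\Lambda_t(X)$ is the set of atoms $a$ such that some occurrence of $X$ in $t$ is in the scope of $[a]$. With a fixed total order on atoms, $\mathcal{T}(\Delta,t)$ is obtained from $t$ by replacing each occurrence $\pi\cdot X$ by $X(\pi\cdot xs)$, where $xs$ is the ascending list of $\{\pi^{-1}(a)\mid a\in\Lambda_t(X)\}\setminus\{a\mid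 a\#X\in\Delta\}$ and $\pi\cdot xs$ applies $\pi$ elementwise (no arguments if empty); atoms, abstractions, function applications and tuples are kept unchanged (atoms become CRS variables, nominal variables become meta-variables). *)

theory Defs
  imports Main "HOL-Combinatorics.Perm"
begin

datatype ('a, 'v, 'f) nterm =
    NAtom 'a
  | NSusp "'a perm" 'v
  | NAbs 'a "('a, 'v, 'f) nterm"
  | NFun 'f "('a, 'v, 'f) nterm"
  | NTup "('a, 'v, 'f) nterm list"

fun occs :: "'a set \<Rightarrow> ('a, 'v, 'f) nterm \<Rightarrow> ('a perm \<times> 'v \<times> 'a set) set" where
  "occs B (NAtom a) = {}"
| "occs B (NSusp p X) = {(p, X, B)}"
| "occs B (NAbs a t) = occs (insert a B) t"
| "occs B (NFun f t) = occs B t"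
| "occs B (NTup ts) = (\<Union>t\<in>set ts. occs B t)"

fun atoms_bound :: "'a set \<Rightarrow> ('a, 'v, 'f) nterm \<Rightarrow> bool" where
  "atoms_bound B (NAtom a) = (a \<in> B)"
| "atoms_bound B (NSusp p X) = True"
| "atoms_bound B (NAbs a t) = atoms_bound (insert a B) t"
| "atoms_bound B (NFun f t) = atoms_bound B t"
| "atoms_bound B (NTup ts) = (\<forall>t\<in>set ts. atoms_bound B t)"

text \<open>Freshness context: a set of pairs (a, X) standing for a # X.\<close>
type_synonym ('a, 'v) fctx = "('a \<times> 'v) set"

definition nclosed :: "('a, 'v) fctx \<Rightarrow> ('a, 'v, 'f) nterm \<Rightarrow> bool" where
  "nclosed \<Delta> t \<longleftrightarrow>
     atoms_bound {} t \<and>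
     (\<forall>(p1, X, B1)\<in>occs {} t. \<forall>(p2, Y, B2)\<in>occs {} t. X = Y \<longrightarrow>
        (\<forall>a. Perm.apply p1 a \<in> B1 \<longrightarrow> Perm.apply p2 a \<in> B2 \<or> (a, X) \<in> \<Delta>)) \<and>
     (\<forall>(p1, X, B1)\<in>occs {} t. \<forall>(p2, Y, B2)\<in>occs {} t. X = Y \<longrightarrow>
        (\<forall>a. Perm.apply p1 a \<noteq> Perm.apply p2 a \<longrightarrow> (Perm.apply p1 a \<notin> B1 \<or> Perm.apply p2 a \<notin> B2) \<longrightarrow> (a, X) \<in> \<Delta>))"

definition ground :: "('a, 'v, 'f) nterm \<Rightarrow> bool" where
  "ground t \<longleftrightarrow> occs {} t = {}"

definition Lam :: "('a, 'v, 'f) nterm \<Rightarrow> 'v \<Rightarrow> 'a set" where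
  "Lam t X = {a. \<exists>p B. (p, X, B) \<in> occs {} t \<and> a \<in> B}"

text \<open>CRS meta-terms: atoms are CRS variables, 'v are meta-variables.\<close>
datatype ('a, 'v, 'f) mterm =
    MVar 'a
  | MApp 'v "('a, 'v, 'f) mterm list"
  | MAbs 'a "('a, 'v, 'f) mterm"
  | MFun 'f "('a, 'v, 'f) mterm"
  | MTup "('a, 'v, 'f) mterm list"

fun mapps :: "('a, 'v, 'f) mterm \<Rightarrow> ('v \<times> nat) set" where
  "mapps (MVar a) = {}"
| "mapps (MApp Z ts) = insert (Z, length ts) (\<Union>t\<in>set ts. mapps t)"
| "mapps (MAbs a t) = mapps t"
| "mapps (MFun f t) = mapps t"
| "mapps (MTup ts) = (\<Union>t\<in>set ts. mapps t)"

fun mbound :: "'a set \<Rightarrow> ('a, 'v, 'f) mterm \<Rightarrow> bool" where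
  "mbound B (MVar a) = (a \<in> B)"
| "mbound B (MApp Z ts) = (\<forall>t\<in>set ts. mbound B t)"
| "mbound B (MAbs a t) = mbound (insert a B) t"
| "mbound B (MFun f t) = mbound B t"
| "mbound B (MTup ts) = (\<forall>t\<in>set ts. mbound B t)"

definition wf_mterm :: "('a, 'v, 'f) mterm \<Rightarrow> bool" where
  "wf_mterm t \<longleftrightarrow> (\<exists>ar :: 'v \<Rightarrow> nat. \<forall>(Z, n)\<in>mapps t. n = ar Z)"

definition closed_mterm :: "('a, 'v, 'f) mterm \<Rightarrow> bool" where
  "closed_mterm t \<longleftrightarrow> wf_mterm t \<and> mbound {} t"

definition crs_term :: "('a, 'v, 'f) mterm \<Rightarrow> bool" where
  "crs_term t \<longleftrightarrow> mapps t = {}"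

text \<open>The translation; L is Lambda_t of the whole term t.\<close>
fun tr :: "('a::linorder, 'v) fctx \<Rightarrow> ('v \<Rightarrow> 'a set) \<Rightarrow> ('a, 'v, 'f) nterm \<Rightarrow> ('a, 'v, 'f) mterm" where
  "tr \<Delta> L (NAtom a) = MVar a"
| "tr \<Delta> L (NSusp p X) =
     MApp X (map (\<lambda>b. MVar (Perm.apply p b))
       (sorted_list_of_set ({Perm.apply (inverse p) a | a. a \<in> L X} - {a. (a, X) \<in> \<Delta>})))"
| "tr \<Delta> L (NAbs a t) = MAbs a (tr \<Delta> L t)"
| "tr \<Delta> L (NFun f t) = MFun f (tr \<Delta> L t)"
| "tr \<Delta> L (NTup ts) = MTup (map (tr \<Delta> L) ts)"

definition translate :: "('a::linorder, 'v) fctx \<Rightarrow> ('a, 'v, 'f) nterm \<Rightarrow> ('a, 'v, 'f) mterm" where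
  "translate \<Delta> t = tr \<Delta> (Lam t) t"

end

theory Submission
  imports Defs
begin

lemma inv_set_iff:
  "c \<in> {Perm.apply (inverse p) a | a. a \<in> A} \<longleftrightarrow> Perm.apply p c \<in> A"
proof -
  have b: "bij (Perm.apply p)" by (simp add: bij_apply)
  show ?thesis
    by (auto simp: apply_inverse bij_inv_eq_iff[OF b] inv_f_f[OF bij_is_inj[OF b]])
qed

lemma mapps_tr:
  "mapps (tr \<Delta> L s) = (\<lambda>(p,X,B). (X, card ({Perm.apply (inverse p) a | a. a \<in> L X} - {a. (a, X) \<in> \<Delta>}))) ` occs B0 s"
proof (induction s arbitrary: B0)
  case (NTup ts)
  then show ?case by (auto simp: image_UN)
qed (auto simp: length_sorted_list_of_set)

lemma mbound_tr:
  "atoms_bound B0 s \<Longrightarrow>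
   (\<forall>(p,X,B)\<in>occs B0 s. \<forall>b\<in>{Perm.apply (inverse p) a | a. a \<in> L X} - {a. (a, X) \<in> \<Delta>}. Perm.apply p b \<in> B)
   \<Longrightarrow> mbound B0 (tr \<Delta> L s)"
proof (induction s arbitrary: B0)
  case (NSusp p X)
  have m: "x \<in> set (sorted_list_of_set A) \<Longrightarrow> x \<in> A" for x and A :: "'a set"
    by (cases "finite A") auto
  from NSusp show ?case by (auto dest!: m)
qed force+

theorem mainTheorem5:
  fixes \<Delta> :: "('a::linorder, 'v) fctx" and t :: "('a, 'v, 'f) nterm"
  assumes "nclosed \<Delta> t"
  shows "closed_mterm (translate \<Delta> t) \<and> (ground t \<longrightarrow> crs_term (translate \<Delta> t))"
proof -
  note nc = assms[unfolded nclosed_def]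
  have ab: "atoms_bound {} t" using nc by blast
  have c2: "\<And>p1 X B1 p2 B2 a. (p1,X,B1) \<in> occs {} t \<Longrightarrow> (p2,X,B2) \<in> occs {} t \<Longrightarrow>
      Perm.apply p1 a \<in> B1 \<Longrightarrow> Perm.apply p2 a \<in> B2 \<or> (a, X) \<in> \<Delta>"
    using nc by fast
  have c3: "\<And>p1 X B1 p2 B2 a. (p1,X,B1) \<in> occs {} t \<Longrightarrow> (p2,X,B2) \<in> occs {} t \<Longrightarrow>
      Perm.apply p1 a \<noteq> Perm.apply p2 a \<Longrightarrow> (Perm.apply p1 a \<notin> B1 \<or> Perm.apply p2 a \<notin> B2) \<Longrightarrow> (a, X) \<in> \<Delta>"
    using nc by fast
  have key: "{Perm.apply (inverse p) a | a. a \<in> Lam t X} - {a. (a, X) \<in> \<Delta>}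
      = {c. (c,X) \<notin> \<Delta> \<and> Perm.apply p c \<in> B}" if o: "(p,X,B) \<in> occs {} t" for p X B
  proof (rule set_eqI)
    fix c
    show "c \<in> {Perm.apply (inverse p) a | a. a \<in> Lam t X} - {a. (a, X) \<in> \<Delta>}
      \<longleftrightarrow> c \<in> {c. (c,X) \<notin> \<Delta> \<and> Perm.apply p c \<in> B}"
    proof
      assume "c \<in> {Perm.apply (inverse p) a | a. a \<in> Lam t X} - {a. (a, X) \<in> \<Delta>}"
      then have l: "Perm.apply p c \<in> Lam t X" and nd: "(c,X) \<notin> \<Delta>"
        using inv_set_iff[of c p "Lam t X"] by blast+
      then obtain p' B' where o': "(p',X,B') \<in> occs {} t" and in': "Perm.apply p c \<in> B'"
        unfolding Lam_def by blast
      have "Perm.apply p c \<in> B"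
      proof (cases "Perm.apply p c = Perm.apply p' c")
        case True
        then show ?thesis using c2[OF o' o, of c] in' nd by auto
      next
        case False
        then show ?thesis using c3[OF o o' False] nd by blast
      qed
      then show "c \<in> {c. (c,X) \<notin> \<Delta> \<and> Perm.apply p c \<in> B}" using nd by blast
    next
      assume "c \<in> {c. (c,X) \<notin> \<Delta> \<and> Perm.apply p c \<in> B}"
      then show "c \<in> {Perm.apply (inverse p) a | a. a \<in> Lam t X} - {a. (a, X) \<in> \<Delta>}"
        using o inv_set_iff[of c p "Lam t X"] unfolding Lam_def by blast
    qed
  qed
  define ar where "ar X = card {c. (c,X) \<notin> \<Delta> \<and> (\<forall>p B. (p,X,B) \<in> occs {} t \<longrightarrow> Perm.apply p c \<in> B)}" for X
  have arq: "card ({Perm.apply (inverse p) a | a. a \<in> Lam t X} - {a. (a, X) \<in> \<Delta>}) = ar X"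
    if o: "(p,X,B) \<in> occs {} t" for p X B
  proof -
    have "{c. (c,X) \<notin> \<Delta> \<and> Perm.apply p c \<in> B} =
          {c. (c,X) \<notin> \<Delta> \<and> (\<forall>p B. (p,X,B) \<in> occs {} t \<longrightarrow> Perm.apply p c \<in> B)}"
      using o c2 by blast
    then show ?thesis using key[OF o] ar_def by simp
  qed
  have wf: "wf_mterm (translate \<Delta> t)"
    unfolding wf_mterm_def translate_def mapps_tr[of _ _ _ "{}"]
    by (rule exI[of _ ar]) (auto simp: arq)
  have mb: "mbound {} (translate \<Delta> t)"
    unfolding translate_def
    by (rule mbound_tr[OF ab]) (use key in blast)
  have cr: "ground t \<longrightarrow> crs_term (translate \<Delta> t)"
    unfolding ground_def crs_term_def translate_def mapps_tr[of _ _ _ "{}"] by simp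
  show ?thesis using wf mb cr closed_mterm_def by blast
qed

end
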